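(* Let $G$ be a connected, simple, undirected graph with infinitely many vertices. Then for every integer $\ell\geq 2$, every $\{\ell\}$-resolving set of $G$ is infinite (i.e. $\beta_\ell(G)=\infty$), and for every integer $\ell\geq 1$, every $\ell$-solid-resolving set of $G$ is infinite (i.e. $\beta_\ell^s(G)=\infty$).
   Context: $d$ is the shortest-path distance; for nonempty $X\subseteq V(G)$, $d(s,X)=\min_{x\in X}d(s,x)$; for $S\subseteq V(G)$, $\mathcal{D}_S(X)$ is the family $(d(s,X))_{s\in S}$. $S$ is an $\{\ell\}$-resolving set if $\mathcal{D}_S(X)\neq\mathcal{D}_S(Y)$ for all distinct nonempty $X,Y\subseteq V(G)$ with $|X|\leq\ell$, $|Y|\leq\ell$; $S$ is an $\ell$-solid-resolving set if $\mathcal{D}_S(X)\neq\mathcal{D}_S(Y)$ for all distinct nonempty $X,Y\subseteq V(G)$ with $|X|\leq \ell$ ($Y$ arbitrary). $\beta_\ell(G)$ and $\beta_\ell^s(G)$ denote the minimum cardinalities of such sets. *)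

theory Defs
  imports Main
begin

text \<open>A simple undirected graph on the vertex type 'a is given by an edge relation E
that is symmetric and irreflexive. The vertex set is UNIV.\<close>

definition simple_graph :: "('a \<Rightarrow> 'a \<Rightarrow> bool) \<Rightarrow> bool" where
  "simple_graph E \<longleftrightarrow> (\<forall>u v. E u v \<longrightarrow> E v u) \<and> (\<forall>v. \<not> E v v)"

definition connected_graph :: "('a \<Rightarrow> 'a \<Rightarrow> bool) \<Rightarrow> bool" where
  "connected_graph E \<longleftrightarrow> (\<forall>u v. \<exists>n. (E ^^ n) u v)"

text \<open>Shortest-path distance (meaningful for connected graphs).\<close>
definition gdist :: "('a \<Rightarrow> 'a \<Rightarrow> bool) \<Rightarrow> 'a \<Rightarrow> 'a \<Rightarrow> nat" where
  "gdist E u v = (LEAST n. (E ^^ n) u v)"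

definition setdist :: "('a \<Rightarrow> 'a \<Rightarrow> bool) \<Rightarrow> 'a \<Rightarrow> 'a set \<Rightarrow> nat" where
  "setdist E s X = (INF x\<in>X. gdist E s x)"

definition distvec :: "('a \<Rightarrow> 'a \<Rightarrow> bool) \<Rightarrow> 'a set \<Rightarrow> 'a set \<Rightarrow> ('a \<Rightarrow> nat)" where
  "distvec E S X = (\<lambda>s. if s \<in> S then setdist E s X else 0)"

definition ell_resolving :: "('a \<Rightarrow> 'a \<Rightarrow> bool) \<Rightarrow> nat \<Rightarrow> 'a set \<Rightarrow> bool" where
  "ell_resolving E l S \<longleftrightarrow>
     (\<forall>X Y. X \<noteq> {} \<and> Y \<noteq> {} \<and> X \<noteq> Y \<and> finite X \<and> card X \<le> l \<and> finite Y \<and> card Y \<le> l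
        \<longrightarrow> distvec E S X \<noteq> distvec E S Y)"

definition ell_solid_resolving :: "('a \<Rightarrow> 'a \<Rightarrow> bool) \<Rightarrow> nat \<Rightarrow> 'a set \<Rightarrow> bool" where
  "ell_solid_resolving E l S \<longleftrightarrow>
     (\<forall>X Y. X \<noteq> {} \<and> Y \<noteq> {} \<and> X \<noteq> Y \<and> finite X \<and> card X \<le> l
        \<longrightarrow> distvec E S X \<noteq> distvec E S Y)"

end

theory Submission
  imports Defs "HOL-Library.FuncSet"
begin

lemma gdist_walk:
  assumes "connected_graph E"
  shows "(E ^^ gdist E u v) u v"
proof -
  obtain n where "(E ^^ n) u v" using assms unfolding connected_graph_def by blast
  thus ?thesis unfolding gdist_def by (rule LeastI)
qed

lemma gdist_tri:
  assumes "connected_graph E"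
  shows "gdist E u v \<le> gdist E u w + gdist E w v"
proof -
  have "(E ^^ (gdist E u w + gdist E w v)) u v"
    using gdist_walk[OF assms, of u w] gdist_walk[OF assms, of w v]
    by (auto simp: relpowp_add)
  thus ?thesis unfolding gdist_def by (rule Least_le)
qed

lemma key:
  assumes conn: "connected_graph E" and inf: "infinite (UNIV :: 'a set)" and fin: "finite (S::'a set)"
  shows "\<exists>x y. x \<noteq> y \<and> (\<forall>s\<in>S. gdist E s x \<le> gdist E s y)"
proof -
  define s0 :: 'a where "s0 = undefined"
  define D :: int where "D = int (Max ((\<lambda>s. gdist E s s0 + gdist E s0 s) ` S))"
  define f where "f = (\<lambda>v. restrict (\<lambda>s. int (gdist E s v) - int (gdist E s0 v)) S)"
  have "f ` UNIV \<subseteq> (\<Pi>\<^sub>E s \<in> S. {-D..D})"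
  proof
    fix g assume "g \<in> f ` UNIV"
    then obtain v where g: "g = f v" by blast
    show "g \<in> (\<Pi>\<^sub>E s \<in> S. {-D..D})"
    proof (unfold g f_def, rule restrict_PiE_iff[THEN iffD2], intro ballI)
      fix s assume s: "s \<in> S"
      have m: "gdist E s s0 + gdist E s0 s \<le> Max ((\<lambda>s. gdist E s s0 + gdist E s0 s) ` S)"
        using fin s by auto
      have t1: "gdist E s v \<le> gdist E s s0 + gdist E s0 v" by (rule gdist_tri[OF conn])
      have t2: "gdist E s0 v \<le> gdist E s0 s + gdist E s v" by (rule gdist_tri[OF conn])
      show "int (gdist E s v) - int (gdist E s0 v) \<in> {-D..D}"
        using m t1 t2 unfolding D_def by auto
    qed
  qed
  moreover have "finite (\<Pi>\<^sub>E s \<in> S. {-D..D})" using fin by (intro finite_PiE) auto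
  ultimately have "finite (f ` UNIV)" by (rule finite_subset)
  then obtain a0 where "infinite {a\<in>UNIV. f a = f a0}"
    using pigeonhole_infinite[OF inf] by blast
  then have infA: "infinite {a. f a = f a0}" by simp
  have "{a. f a = f a0} \<noteq> {}" using infA by (rule infinite_imp_nonempty)
  then obtain x where x: "f x = f a0" by blast
  have "infinite ({a. f a = f a0} - {x})" using infA finite_Diff2[of "{x}" "{a. f a = f a0}"] by blast
  then have "{a. f a = f a0} - {x} \<noteq> {}" by (rule infinite_imp_nonempty)
  then obtain y where y: "f y = f a0" "y \<noteq> x" by blast
  have fxy: "f x = f y" using x y by simp
  have eq: "int (gdist E s x) - int (gdist E s0 x) = int (gdist E s y) - int (gdist E s0 y)"
    if "s \<in> S" for s
    using fun_cong[OF fxy, of s] that unfolding f_def by simp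
  show ?thesis
  proof (cases "gdist E s0 x \<le> gdist E s0 y")
    case True
    show ?thesis
      by (rule exI[of _ x], rule exI[of _ y]) (use y(2) True eq in force)
  next
    case False
    show ?thesis
      by (rule exI[of _ y], rule exI[of _ x]) (use y(2) False eq in force)
  qed
qed

lemma distvec_eq:
  assumes "\<forall>s\<in>S. gdist E s x \<le> gdist E s y"
  shows "distvec E S {x} = distvec E S {x, y}"
proof (rule ext)
  fix s show "distvec E S {x} s = distvec E S {x, y} s"
    using assms unfolding distvec_def setdist_def by (simp add: cInf_eq_Min min_def)
qed

theorem mainTheorem7:
  fixes E :: "'a \<Rightarrow> 'a \<Rightarrow> bool"
  assumes "simple_graph E" and "connected_graph E" and "infinite (UNIV :: 'a set)"
  shows "(\<forall>l::nat. l \<ge> 2 \<longrightarrow> (\<forall>S. ell_resolving E l S \<longrightarrow> infinite S))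
       \<and> (\<forall>l::nat. l \<ge> 1 \<longrightarrow> (\<forall>S. ell_solid_resolving E l S \<longrightarrow> infinite S))"
proof (intro conjI allI impI notI)
  fix l :: nat and S :: "'a set"
  assume l: "l \<ge> 2" and r: "ell_resolving E l S" and fin: "finite S"
  obtain x y where xy: "x \<noteq> y" "\<forall>s\<in>S. gdist E s x \<le> gdist E s y"
    using key[OF assms(2,3) fin] by blast
  have "card {x, y} \<le> l" using xy l by simp
  moreover have "card {x} \<le> l" using l by simp
  moreover have "{x} \<noteq> {x, y}" using xy(1) by auto
  ultimately show False using r[unfolded ell_resolving_def, rule_format, of "{x}" "{x, y}"] distvec_eq[OF xy(2)]
    by simp
next
  fix l :: nat and S :: "'a set"
  assume l: "l \<ge> 1" and r: "ell_solid_resolving E l S" and fin: "finite S"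
  obtain x y where xy: "x \<noteq> y" "\<forall>s\<in>S. gdist E s x \<le> gdist E s y"
    using key[OF assms(2,3) fin] by blast
  have "card {x} \<le> l" using l by simp
  moreover have "{x} \<noteq> {x, y}" using xy(1) by auto
  ultimately show False using r[unfolded ell_solid_resolving_def, rule_format, of "{x}" "{x, y}"] distvec_eq[OF xy(2)]
    by simp
qed

end
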